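(* Let $X$ be a pointed set and $k\ge 1$. Then the diagram $$\mathrm{ab}\circ H_k=\pi_k\circ\mu\colon F[X]\to \bar{\mathbb Z}[X^{\wedge k}]$$ commutes, where $H_k\colon F[X]\to F[X^{\wedge k}]$ is the combinatorial James–Hopf map, $\mu\colon F[X]\to\mathbb Z\langle\langle X\rangle\rangle$ is the Magnus embedding, $\pi_k$ is the projection of a formal power series onto its homogeneous component of degree $k$, and $\mathrm{ab}\colon F[X^{\wedge k}]\to\bar{\mathbb Z}[X^{\wedge k}]$ is abelianization.
   Context: For a pointed set $X$ with basepoint $*$, $F[X]$ is the free group on $X$ modulo the relation $*=1$ (the reduced free group; for pointed simplicial sets it is applied degreewise, Milnor's construction). $X^{\wedge k}$ is the $k$-fold smash product; its non-basepoint elements are $x_1\wedge\dots\wedge x_k$ with all $x_i\neq *$. $\bar{\mathbb Z}[Y]=\mathbb Z[Y]/\mathbb Z[*]$ is the free abelian group on $Y\setminus\{*\}$. $\mathbb Z\langle\langle X\rangle\rangle$ is the ring of formal power series in the non-commuting variables $X\setminus\{*\}$, and its degree-$k$ homogeneous component is identified with $\bar{\mathbb Z}[X^{\wedge k}]\cong\bar{\mathbb Z}[X]^{\otimes k}$ via $x_1\wedge\dots\wedge x_k\leftrightarrow x_1\cdots x_k$. The Magnus embedding is the homomorphism $\mu$ with $\mu(x)=1+x$ for $x\in X\setminus\{*\}$. Combinatorial James–Hopf map: for a reduced word $w=x_1^{\varepsilon_1}\cdots x_n^{\varepsilon_n}\in F[X]$ ($x_i\in X$, $\varepsilon_i=\pm1$),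 $$H_k(w)=\prod_{(i_1,\dots,i_k)}(x_{i_1}\wedge\dots\wedge x_{i_k})^{\varepsilon_{i_1}\cdots\varepsilon_{i_k}}\in F[X^{\wedge k}],$$ the product taken over all sequences $1\le i_1,\dots,i_k\le n$ with $i_j\le i_{j+1}-\frac{\varepsilon_{i_{j+1}}+1}{2}$ for all $j$ (i.e. $i_j<i_{j+1}$ if $\varepsilon_{i_{j+1}}=1$, and $i_j\le i_{j+1}$ if $\varepsilon_{i_{j+1}}=-1$), with factors arranged in right lexicographic order: $(i_1,\dots,i_k)$ precedes $(j_1,\dots,j_k)$ iff at the largest position $m$ where they differ, $i_m<j_m$. On positive words this restricts to the classical combinatorial James–Hopf map $x_1\cdots x_n\mapsto\prod_{i_1<\dots<i_k}x_{i_1}\wedge\dots\wedge x_{i_k}$ on the James construction. For simplicial sets $H_k$ is defined degreewise. *)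

theory Defs
  imports Main
begin

text \<open>Pointed set: a type 'a together with a basepoint b.
  A letter of the free group F[X] is a pair (x, e) with x \<noteq> b;
  e = True means exponent +1, e = False means exponent -1.\<close>

type_synonym 'a fletter = "'a \<times> bool"

definition reduced_words :: "'a \<Rightarrow> 'a fletter list set" where
  "reduced_words b = {w. (\<forall>l\<in>set w. fst l \<noteq> b) \<and>
      (\<forall>i. Suc i < length w \<longrightarrow>
          \<not> (fst (w!i) = fst (w!Suc i) \<and> snd (w!i) \<noteq> snd (w!Suc i)))}"

definition free_reduce :: "'g fletter list \<Rightarrow> 'g fletter list" where
  "free_reduce ws = foldr (\<lambda>a acc. case acc of [] \<Rightarrow> [a]
      | c # r \<Rightarrow> (if fst a = fst c \<and> snd a \<noteq> snd c then r else a # acc)) ws []"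

text \<open>Index sequences (0-based) of length k for the word w, with
  i_j < i_(j+1) if eps_(i_(j+1)) = +1 and i_j \<le> i_(j+1) if eps_(i_(j+1)) = -1,
  listed in right lexicographic order (first by last entry, then recursively).\<close>
fun jh_seqs :: "'a fletter list \<Rightarrow> nat \<Rightarrow> nat list list" where
  "jh_seqs w 0 = [[]]"
| "jh_seqs w (Suc k) =
     concat (map (\<lambda>m. map (\<lambda>p. p @ [m])
        (filter (\<lambda>p. p = [] \<or> (if snd (w!m) then last p < m else last p \<le> m)) (jh_seqs w k)))
      [0..<length w])"

text \<open>The factor (x_{i_1} \<and> ... \<and> x_{i_k})^(eps_{i_1}...eps_{i_k}) as a letter of
  F[X^k-smash]; a smash element x_1\<and>...\<and>x_k is represented by the list [x_1,...,x_k].\<close>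
definition jh_factor :: "'a fletter list \<Rightarrow> nat list \<Rightarrow> 'a list fletter" where
  "jh_factor w p = (map (\<lambda>i. fst (w!i)) p, even (length (filter (\<lambda>i. \<not> snd (w!i)) p)))"

definition james_hopf :: "nat \<Rightarrow> 'a fletter list \<Rightarrow> 'a list fletter list" where
  "james_hopf k w = free_reduce (map (jh_factor w) (jh_seqs w k))"

text \<open>Abelianization F[Y] \<rightarrow> Zbar[Y]; elements of the free abelian group are
  represented as integer-valued coefficient functions.\<close>
definition ab_word :: "'g fletter list \<Rightarrow> 'g \<Rightarrow> int" where
  "ab_word ws y = (\<Sum>l\<leftarrow>ws. if fst l = y then (if snd l then 1 else -1) else 0)"

text \<open>Formal power series in non-commuting variables: coefficient functions on words.\<close>
type_synonym 'a ncps = "'a list \<Rightarrow> int"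

definition ps_one :: "'a ncps" where
  "ps_one s = (if s = [] then 1 else 0)"

definition ps_mult :: "'a ncps \<Rightarrow> 'a ncps \<Rightarrow> 'a ncps" where
  "ps_mult f g s = (\<Sum>i\<le>length s. f (take i s) * g (drop i s))"

definition ps_one_plus :: "'a \<Rightarrow> 'a ncps" where
  "ps_one_plus x s = (if s = [] \<or> s = [x] then 1 else 0)"

text \<open>(1 + x)^(-1) = \<Sum>n (-1)^n x^n\<close>
definition ps_one_plus_inv :: "'a \<Rightarrow> 'a ncps" where
  "ps_one_plus_inv x s = (if (\<forall>c\<in>set s. c = x) then (-1) ^ length s else 0)"

definition magnus :: "'a fletter list \<Rightarrow> 'a ncps" where
  "magnus w = foldr (\<lambda>l acc. ps_mult (if snd l then ps_one_plus (fst l)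
                                      else ps_one_plus_inv (fst l)) acc) w ps_one"

definition ps_proj :: "nat \<Rightarrow> 'a ncps \<Rightarrow> 'a list \<Rightarrow> int" where
  "ps_proj k f s = (if length s = k then f s else 0)"

end

theory Submission imports Defs begin

definition stepfr :: "'g fletter \<Rightarrow> 'g fletter list \<Rightarrow> 'g fletter list" where
  "stepfr a acc = (case acc of [] \<Rightarrow> [a]
      | c # r \<Rightarrow> (if fst a = fst c \<and> snd a \<noteq> snd c then r else a # acc))"

lemma free_reduce_Cons: "free_reduce (a # ws) = stepfr a (free_reduce ws)"
  by (simp add: free_reduce_def stepfr_def)

lemma ab_word_Cons: "ab_word (a # ws) y = (if fst a = y then (if snd a then 1 else -1) else 0) + ab_word ws y"
  by (simp add: ab_word_def)

lemma ab_word_Nil: "ab_word [] y = 0" by (simp add: ab_word_def)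

lemma ab_stepfr: "ab_word (stepfr a acc) y = (if fst a = y then (if snd a then 1 else -1) else 0) + ab_word acc y"
  by (cases acc) (auto simp: stepfr_def ab_word_Cons ab_word_Nil)

lemma ab_free_reduce: "ab_word (free_reduce ws) = ab_word ws"
proof (induction ws)
  case Nil then show ?case by (simp add: free_reduce_def)
next
  case (Cons a ws) then show ?case
    by (auto simp: free_reduce_Cons ab_stepfr ab_word_Cons fun_eq_iff)
qed

definition R :: "'a fletter list \<Rightarrow> nat \<Rightarrow> nat \<Rightarrow> bool" where
  "R w a b = (if snd (w!b) then a < b else a \<le> b)"

definition S :: "'a fletter list \<Rightarrow> nat \<Rightarrow> nat list set" where
  "S w k = {p. length p = k \<and> (\<forall>i\<in>set p. i < length w) \<and> successively (R w) p}"

definition jsgn :: "'a fletter list \<Rightarrow> nat list \<Rightarrow> int" where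
  "jsgn w p = (if even (length (filter (\<lambda>i. \<not> snd (w!i)) p)) then 1 else -1)"

definition lab :: "'a fletter list \<Rightarrow> nat list \<Rightarrow> 'a list" where
  "lab w p = map (\<lambda>i. fst (w!i)) p"

lemma finite_S: "finite (S w k)"
proof -
  have "S w k \<subseteq> {p. set p \<subseteq> {..<length w} \<and> length p = k}" by (auto simp: S_def)
  thus ?thesis using finite_lists_length_eq[of "{..<length w}" k] finite_subset by blast
qed

lemma set_jh: "set (jh_seqs w k) = S w k"
proof (induction k)
  case 0 then show ?case by (auto simp: S_def)
next
  case (Suc k)
  show ?case
  proof (intro set_eqI iffI)
    fix p assume "p \<in> set (jh_seqs w (Suc k))"
    then obtain m q where "m < length w" "q \<in> S w k" "p = q @ [m]"
       "q = [] \<or> (if snd (w!m) then last q < m else last q \<le> m)"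
      using Suc by auto
    then show "p \<in> S w (Suc k)"
      by (auto simp: S_def successively_append_iff R_def)
  next
    fix p assume p: "p \<in> S w (Suc k)"
    then have "p \<noteq> []" by (auto simp: S_def)
    then obtain q m where qm: "p = q @ [m]" by (metis rev_exhaust)
    with p have "m < length w" "q \<in> S w k" 
       "q = [] \<or> (if snd (w!m) then last q < m else last q \<le> m)"
      by (auto simp: S_def successively_append_iff R_def)
    then show "p \<in> set (jh_seqs w (Suc k))" using Suc qm
      by (auto intro!: bexI[of _ m] imageI)
  qed
qed

lemma distinct_concat_map:
  assumes "distinct xs" "\<And>x. x \<in> set xs \<Longrightarrow> distinct (f x)"
    "\<And>x y. x \<in> set xs \<Longrightarrow> y \<in> set xs \<Longrightarrow> x \<noteq> y \<Longrightarrow> set (f x) \<inter> set (f y) = {}"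
  shows "distinct (concat (map f xs))"
  using assms by (induction xs) auto

lemma distinct_jh: "distinct (jh_seqs w k)"
proof (induction k)
  case 0 then show ?case by simp
next
  case (Suc k)
  show ?case unfolding jh_seqs.simps
    by (rule distinct_concat_map) (auto simp: distinct_map inj_on_def Suc)
qed


fun cnt :: "'a fletter list \<Rightarrow> 'a list \<Rightarrow> int" where
  "cnt [] s = (if s = [] then 1 else 0)"
| "cnt (l # w) [] = cnt w []"
| "cnt (l # w) (y # t) = (if snd l then cnt w (y # t) + (if y = fst l then cnt w t else 0)
      else cnt w (y # t) - (if y = fst l then cnt (l # w) t else 0))"

lemma ps_mult_Nil: "ps_mult f g [] = f [] * g []"
  by (simp add: ps_mult_def)

lemma ps_mult_Cons: "ps_mult f g (y # t) = f [] * g (y # t) + (\<Sum>i\<le>length t. f (y # take i t) * g (drop i t))"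
  unfolding ps_mult_def by (simp add: sum.atMost_Suc_shift del: sum.atMost_Suc)

lemma magnus_Cons: "magnus (l # w) = ps_mult (if snd l then ps_one_plus (fst l) else ps_one_plus_inv (fst l)) (magnus w)"
  by (simp add: magnus_def)

lemma magnus_Nil: "magnus [] = ps_one" by (simp add: magnus_def)

lemma pos_mult: "ps_mult (ps_one_plus x) g (y # t) = g (y # t) + (if y = x then g t else 0)"
proof -
  have "(\<Sum>i\<le>length t. ps_one_plus x (y # take i t) * g (drop i t)) =
        (\<Sum>i\<le>length t. if i = 0 then (if y = x then g t else 0) else 0)"
    by (rule sum.cong) (auto simp: ps_one_plus_def)
  then show ?thesis by (simp add: ps_mult_Cons ps_one_plus_def)
qed

lemma neg_mult: "ps_mult (ps_one_plus_inv x) g (y # t) = g (y # t) - (if y = x then ps_mult (ps_one_plus_inv x) g t else 0)"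
proof -
  have "(\<Sum>i\<le>length t. ps_one_plus_inv x (y # take i t) * g (drop i t)) =
        (\<Sum>i\<le>length t. if y = x then - (ps_one_plus_inv x (take i t) * g (drop i t)) else 0)"
    by (rule sum.cong) (auto simp: ps_one_plus_inv_def)
  also have "\<dots> = (if y = x then - ps_mult (ps_one_plus_inv x) g t else 0)"
    by (simp add: ps_mult_def sum_negf)
  finally show ?thesis by (simp add: ps_mult_Cons ps_one_plus_inv_def)
qed

lemma magnus_pos: "magnus ((x,True) # w) = ps_mult (ps_one_plus x) (magnus w)"
  by (simp add: magnus_def)
lemma magnus_neg: "magnus ((x,False) # w) = ps_mult (ps_one_plus_inv x) (magnus w)"
  by (simp add: magnus_def)

lemma magnus_cnt: "magnus w s = cnt w s"
proof (induction w arbitrary: s)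
  case Nil then show ?case by (simp add: magnus_Nil ps_one_def)
next
  case (Cons l w)
  note IH = Cons.IH
  obtain x e where l: "l = (x, e)" by force
  show ?case
  proof (cases e)
    case True
    then show ?thesis
      by (cases s) (simp_all add: l magnus_pos pos_mult ps_mult_Nil ps_one_plus_def IH)
  next
    case False
    show ?thesis
    proof (induction s)
      case Nil then show ?case by (simp add: l False magnus_neg ps_mult_Nil ps_one_plus_inv_def IH)
    next
      case (Cons y t)
      then show ?case
        by (simp add: l False magnus_neg neg_mult IH)
    qed
  qed
qed


definition F :: "'a fletter list \<Rightarrow> 'a list \<Rightarrow> int" where
  "F w s = (\<Sum>p\<in>S w (length s). if lab w p = s then jsgn w p else 0)"

lemma S_zero: "S w 0 = {[]}" by (auto simp: S_def)

lemma S_Nil_Suc: "S [] (Suc k) = {}"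
  by (auto simp: S_def)

lemma R_Suc: "R (l # w) (Suc a) (Suc b) = R w a b" by (simp add: R_def)

lemma shift_S: "(map Suc r \<in> S (l # w) k) = (r \<in> S w k)"
  by (auto simp: S_def successively_map R_Suc)

lemma succ_ge: "successively (R w) (a # p) \<Longrightarrow> x \<in> set p \<Longrightarrow> a \<le> x"
proof (induction p arbitrary: a)
  case Nil then show ?case by simp
next
  case (Cons b p)
  then have "R w a b" "successively (R w) (b # p)" by auto
  then have "a \<le> b" by (auto simp: R_def split: if_splits)
  then show ?case using Cons by (cases "x = b") force+
qed

lemma pos_unshift: "\<forall>i\<in>set p. 0 < i \<Longrightarrow> p = map Suc (map (\<lambda>i. i - 1) p)"
  by (induction p) auto

lemma S_Cons_Suc: "S (l # w) (Suc k) =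
   Cons 0 ` (if snd l then map Suc ` S w k else S (l # w) k) \<union> map Suc ` S w (Suc k)"
proof (intro set_eqI iffI)
  fix p assume p: "p \<in> S (l # w) (Suc k)"
  then obtain a q where pq: "p = a # q" by (cases p) (auto simp: S_def)
  have ge: "\<And>x. x \<in> set q \<Longrightarrow> a \<le> x" using p pq succ_ge by (auto simp: S_def)
  show "p \<in> Cons 0 ` (if snd l then map Suc ` S w k else S (l # w) k) \<union> map Suc ` S w (Suc k)"
  proof (cases a)
    case 0
    have q: "q \<in> S (l # w) k" using p pq by (auto simp: S_def successively_Cons)
    show ?thesis
    proof (cases "snd l")
      case True
      have "\<forall>i\<in>set q. 0 < i"
      proof (cases q)
        case (Cons b r)
        have "R (l # w) 0 b" using p pq Cons \<open>a = 0\<close> by (auto simp: S_def)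
        then have "0 < b" using True by (cases b) (auto simp: R_def)
        have "successively (R (l # w)) (b # r)" using q Cons by (simp add: S_def)
        then have "\<And>x. x \<in> set r \<Longrightarrow> b \<le> x" using succ_ge by blast
        then show ?thesis using \<open>0 < b\<close> Cons by fastforce
      qed simp
      then have qe: "q = map Suc (map (\<lambda>i. i - 1) q)" by (rule pos_unshift)
      then have "map (\<lambda>i. i - 1) q \<in> S w k" using q shift_S by metis
      then have "q \<in> map Suc ` S w k" using qe by (rule rev_image_eqI)
      then show ?thesis using True pq 0 by auto
    next
      case False then show ?thesis using q pq 0 by auto
    qed
  next
    case (Suc j)
    then have "\<forall>i\<in>set p. 0 < i" using ge pq by fastforce
    then have e: "p = map Suc (map (\<lambda>i. i - 1) p)" by (rule pos_unshift)
    then have "map (\<lambda>i. i - 1) p \<in> S w (Suc k)" using p shift_S by metis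
    then show ?thesis using e by blast
  qed
next
  fix p assume p: "p \<in> Cons 0 ` (if snd l then map Suc ` S w k else S (l # w) k) \<union> map Suc ` S w (Suc k)"
  show "p \<in> S (l # w) (Suc k)"
  proof (cases "p \<in> map Suc ` S w (Suc k)")
    case True then show ?thesis using shift_S by blast
  next
    case False
    then obtain q where q: "p = 0 # q" "q \<in> (if snd l then map Suc ` S w k else S (l # w) k)"
      using p by auto
    show ?thesis
    proof (cases "snd l")
      case True
      then obtain r where r: "q = map Suc r" "r \<in> S w k" using q by auto
      then have "q \<in> S (l # w) k" using shift_S by metis
      then show ?thesis using q r by (cases r) (auto simp: S_def R_def)
    next
      case False
      then have "q \<in> S (l # w) k" using q by auto
      then show ?thesis using q False by (cases q) (auto simp: S_def R_def nth_Cons split: nat.splits)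
    qed
  qed
qed

lemma lab_shift: "lab (l # w) (map Suc r) = lab w r" by (simp add: lab_def)
lemma sgn_shift: "jsgn (l # w) (map Suc r) = jsgn w r" by (simp add: jsgn_def filter_map o_def)
lemma lab_0: "lab (l # w) (0 # q) = fst l # lab (l # w) q" by (simp add: lab_def)
lemma sgn_0: "jsgn (l # w) (0 # q) = (if snd l then jsgn (l # w) q else - jsgn (l # w) q)"
  by (simp add: jsgn_def)

lemma F_Nil: "F w [] = 1" by (simp add: F_def S_zero lab_def jsgn_def)

lemma F_Cons: "F (l # w) (y # t) = F w (y # t) +
   (if y = fst l then (if snd l then F w t else - F (l # w) t) else 0)"
proof -
  define f where "f p = (if lab (l # w) p = y # t then jsgn (l # w) p else 0)" for p
  define A where "A = (if snd l then map Suc ` S w (length t) else S (l # w) (length t))"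
  have fin: "finite A" by (auto simp: A_def finite_S)
  have disj: "Cons 0 ` A \<inter> map Suc ` S w (Suc (length t)) = {}" by auto
  have injS: "inj_on (map Suc) X" for X :: "nat list set" by (auto simp: inj_on_def)
  have "F (l # w) (y # t) = sum f (Cons 0 ` A \<union> map Suc ` S w (Suc (length t)))"
    by (simp add: F_def S_Cons_Suc f_def A_def)
  also have "\<dots> = sum f (Cons 0 ` A) + sum f (map Suc ` S w (Suc (length t)))"
    by (rule sum.union_disjoint) (use fin finite_S disj in auto)
  also have "sum f (map Suc ` S w (Suc (length t))) = sum (f \<circ> map Suc) (S w (Suc (length t)))"
    by (rule sum.reindex[OF injS])
  also have "\<dots> = F w (y # t)"
    unfolding F_def by (rule sum.cong) (auto simp: f_def lab_shift sgn_shift)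
  also have "sum f (Cons 0 ` A) = sum (f \<circ> Cons 0) A"
    by (rule sum.reindex) simp
  also have "\<dots> = (if y = fst l then (if snd l then F w t else - F (l # w) t) else 0)"
  proof (cases "snd l")
    case True
    have "sum (f \<circ> Cons 0) A = sum (f \<circ> Cons 0 \<circ> map Suc) (S w (length t))"
      by (simp add: A_def True sum.reindex[OF injS])
    also have "\<dots> = (\<Sum>r\<in>S w (length t). if y = fst l then (if lab w r = t then jsgn w r else 0) else 0)"
      by (rule sum.cong) (auto simp: f_def lab_0 sgn_0 True lab_shift sgn_shift)
    finally show ?thesis using True by (simp add: F_def)
  next
    case False
    have "sum (f \<circ> Cons 0) A = (\<Sum>q\<in>S (l # w) (length t). if y = fst l then - (if lab (l # w) q = t then jsgn (l # w) q else 0) else 0)"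
      by (simp add: A_def False) (rule sum.cong, auto simp: f_def lab_0 sgn_0 False)
    then show ?thesis using False by (simp add: F_def sum_negf)
  qed
  finally show ?thesis by simp
qed

lemma F_cnt: "F w s = cnt w s"
proof (induction w arbitrary: s)
  case Nil then show ?case
    by (cases s) (simp add: F_Nil, simp add: F_def S_Nil_Suc)
next
  case (Cons l w)
  note IH = Cons.IH
  show ?case
  proof (induction s)
    case Nil then show ?case by (simp add: F_Nil IH[symmetric])
  next
    case (Cons y t)
    then show ?case by (simp add: F_Cons IH)
  qed
qed


lemma ab_jh: "ab_word (james_hopf k w) s = (\<Sum>p\<in>S w k. if lab w p = s then jsgn w p else 0)"
proof -
  have "ab_word (james_hopf k w) s = ab_word (map (jh_factor w) (jh_seqs w k)) s"
    by (simp add: james_hopf_def ab_free_reduce)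
  also have "\<dots> = sum_list (map (\<lambda>p. if lab w p = s then jsgn w p else 0) (jh_seqs w k))"
    unfolding ab_word_def map_map o_def
    by (rule arg_cong[where f=sum_list], rule map_cong) (auto simp: jh_factor_def lab_def jsgn_def)
  also have "\<dots> = (\<Sum>p\<in>S w k. if lab w p = s then jsgn w p else 0)"
    by (simp add: sum_list_distinct_conv_sum_set distinct_jh set_jh)
  finally show ?thesis .
qed

theorem theorem2p2:
  fixes b :: 'a and w :: "'a fletter list" and k :: nat
  assumes "k \<ge> 1"
    and "w \<in> reduced_words b"
  shows "ab_word (james_hopf k w) = ps_proj k (magnus w)"
proof
  fix s
  show "ab_word (james_hopf k w) s = ps_proj k (magnus w) s"
  proof (cases "length s = k")
    case True
    then show ?thesis using F_cnt[of w s] magnus_cnt[of w s]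
      by (simp add: ab_jh ps_proj_def F_def)
  next
    case False
    have "(\<Sum>p\<in>S w k. if lab w p = s then jsgn w p else 0) = 0"
      by (rule sum.neutral) (use False in \<open>auto simp: S_def lab_def\<close>)
    then show ?thesis using False by (simp add: ab_jh ps_proj_def)
  qed
qed

end
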